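(* (i) If $j\in A$, then $\lfloor(\varphi-1)(\lfloor\varphi j\rfloor+1)\rfloor=j$. (ii) If $j\in B$, then $\lfloor\varphi\lfloor(\varphi-1)j\rfloor\rfloor+1=j$.
   Context: $\mathbb N=\{1,2,\dots\}$, $\varphi=\frac{1+\sqrt5}{2}$, $A=\{\lfloor n\varphi\rfloor\mid n\in\mathbb N\}$ and $B=\{\lfloor n\varphi^2\rfloor\mid n\in\mathbb N\}$. *)

theory Defs
  imports Complex_Main
begin

definition phi :: real where
  "phi = (1 + sqrt 5) / 2"

definition setA :: "int set" where
  "setA = {\<lfloor>real n * phi\<rfloor> | n :: nat. n \<ge> 1}"

definition setB :: "int set" where
  "setB = {\<lfloor>real n * phi ^ 2\<rfloor> | n :: nat. n \<ge> 1}"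

end

theory Submission
  imports Defs
begin

lemma phi_sq: "phi * phi = phi + 1"
proof -
  have "sqrt 5 * sqrt 5 = (5::real)" by simp
  then show ?thesis unfolding phi_def by (simp add: field_simps)
qed

lemma phi_bounds: "3/2 < phi \<and> phi < 2"
proof -
  have "2 < sqrt (5::real)" by (rule real_less_rsqrt) simp
  moreover have "sqrt (5::real) < 3" by (rule real_less_lsqrt) simp_all
  ultimately show ?thesis unfolding phi_def by simp
qed

lemma noint: "(0::int) < n \<Longrightarrow> k*k \<noteq> k*n + n*n"
proof (induction "nat n" arbitrary: n k rule: less_induct)
  case less
  show ?case
  proof
    assume eq: "k*k = k*n + n*n"
    show False
    proof (cases "even n")
      case False
      have ev: "even (k*k) = even (k*n + n*n)" using eq by simp
      show False
      proof (cases "even k")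
        case True
        then show False using ev False by (simp add: even_mult_iff)
      next
        case F2: False
        then show False using ev False by (simp add: even_mult_iff)
      qed
    next
      case True
      then obtain m where m: "n = 2*m" by blast
      have "even (k*k)" using eq m by simp
      then obtain l where l: "k = 2*l" by auto
      have "4*(l*l) = 4*(l*m + m*m)" using eq m l by (simp add: algebra_simps)
      then have e2: "l*l = l*m + m*m" by simp
      have "0 < m" "nat m < nat n" using m less.prems by auto
      then show False using less.hyps e2 by blast
    qed
  qed
qed

lemma frac_pos:
  assumes "n \<ge> (1::nat)"
  shows "real n * phi \<noteq> of_int k"
proof
  assume h: "real n * phi = of_int k"
  have "real_of_int (k*k) = (real n * phi) * (real n * phi)" using h by simp
  also have "\<dots> = real n * real n * (phi * phi)" by (simp add: algebra_simps)
  also have "\<dots> = real_of_int (k * int n + int n * int n)"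
    using h by (simp add: phi_sq algebra_simps)
  finally have "k*k = k * int n + int n * int n" by linarith
  moreover have "(0::int) < int n" using assms by simp
  ultimately show False using noint by blast
qed

theorem proposition5p6:
  shows "(\<forall>j\<in>setA. \<lfloor>(phi - 1) * (of_int \<lfloor>phi * of_int j\<rfloor> + 1)\<rfloor> = j) \<and>
         (\<forall>j\<in>setB. \<lfloor>phi * of_int \<lfloor>(phi - 1) * of_int j\<rfloor>\<rfloor> + 1 = j)"
proof (intro conjI ballI)
  have pb: "3/2 < phi" "phi < 2" using phi_bounds by auto
  fix j assume "j \<in> setA"
  then obtain n :: nat where n: "n \<ge> 1" "j = \<lfloor>real n * phi\<rfloor>" unfolding setA_def by auto
  define f where "f = real n * phi - of_int j"
  have fj: "real n * phi = of_int j + f" using f_def by simp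
  have f0: "0 < f" using f_def frac_pos[OF n(1), of j] n(2) of_int_floor_le[of "real n * phi"] by (simp add: less_le)
  have f1: "f < 1" using n(2) f_def by linarith
  have m1: "f * (2 - phi) = f - f * (phi - 1)" by (simp add: algebra_simps)
  have e1: "phi * of_int j = real n + of_int j - f * (phi - 1)"
  proof -
    have "phi * of_int j = phi * (real n * phi - f)" using fj by simp
    also have "\<dots> = real n * (phi*phi) - phi * f" by (simp add: algebra_simps)
    also have "\<dots> = real n * (phi + 1) - phi * f" using phi_sq by simp
    also have "\<dots> = real n + real n * phi - f - f * (phi - 1)" by (simp add: algebra_simps)
    finally show ?thesis using fj by linarith
  qed
  have p1: "0 < f * (phi - 1)" "f * (phi - 1) < 1"
     apply (rule mult_pos_pos) using f0 pb apply linarith+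
    using mult_strict_mono[of f 1 "phi - 1" 1] f0 f1 pb by simp
  have p2: "0 < f * (2 - phi)" "f * (2 - phi) < 1"
     apply (rule mult_pos_pos) using f0 pb apply linarith+
    using mult_strict_mono[of f 1 "2 - phi" 1] f0 f1 pb by simp
  have fl: "\<lfloor>phi * of_int j\<rfloor> = int n + j - 1"
    unfolding floor_eq_iff using e1 p1 by simp
  have e2: "(phi - 1) * (of_int \<lfloor>phi * of_int j\<rfloor> + 1) = of_int j + f * (2 - phi)"
  proof -
    have "(phi - 1) * (of_int \<lfloor>phi * of_int j\<rfloor> + 1) = (phi - 1) * (real n + of_int j)"
      using fl by simp
    also have "\<dots> = real n * phi - real n + phi * of_int j - of_int j" by (simp add: algebra_simps)
    finally show ?thesis using e1 fj m1 by linarith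
  qed
  show "\<lfloor>(phi - 1) * (of_int \<lfloor>phi * of_int j\<rfloor> + 1)\<rfloor> = j"
    unfolding floor_eq_iff using e2 p2 by simp
next
  have pb: "3/2 < phi" "phi < 2" using phi_bounds by auto
  fix j assume "j \<in> setB"
  then obtain n :: nat where n: "n \<ge> 1" "j = \<lfloor>real n * phi ^ 2\<rfloor>" unfolding setB_def by auto
  define a where "a = \<lfloor>real n * phi\<rfloor>"
  define f where "f = real n * phi - of_int a"
  have fa: "real n * phi = of_int a + f" using f_def by simp
  have f0: "0 < f" using f_def frac_pos[OF n(1), of a] a_def of_int_floor_le[of "real n * phi"] by (simp add: less_le)
  have f1: "f < 1" using a_def f_def by linarith
  have m1: "f * (2 - phi) = f - f * (phi - 1)" by (simp add: algebra_simps)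
  have "real n * phi ^ 2 = real n * (phi * phi)" by (simp add: power2_eq_square)
  also have "\<dots> = real n * phi + of_int (int n)" using phi_sq by (simp add: algebra_simps)
  finally have "\<lfloor>real n * phi ^ 2\<rfloor> = a + int n" using a_def by simp
  then have j: "j = int n + a" using n(2) by simp
  have e1: "(phi - 1) * of_int j = of_int a + f * (2 - phi)"
  proof -
    have "(phi - 1) * of_int j = (phi - 1) * (real n + real n * phi - f)" using j fa by simp
    also have "\<dots> = real n * (phi * phi) - real n - f * (phi - 1)" by (simp add: algebra_simps)
    also have "\<dots> = real n * (phi + 1) - real n - f * (phi - 1)" using phi_sq by simp
    also have "\<dots> = real n * phi - f * (phi - 1)" by (simp add: algebra_simps)
    finally show ?thesis using fa m1 by linarith
  qed
  have p1: "0 < f * (phi - 1)" "f * (phi - 1) < 1"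
     apply (rule mult_pos_pos) using f0 pb apply linarith+
    using mult_strict_mono[of f 1 "phi - 1" 1] f0 f1 pb by simp
  have p2: "0 < f * (2 - phi)" "f * (2 - phi) < 1"
     apply (rule mult_pos_pos) using f0 pb apply linarith+
    using mult_strict_mono[of f 1 "2 - phi" 1] f0 f1 pb by simp
  have fl: "\<lfloor>(phi - 1) * of_int j\<rfloor> = a" unfolding floor_eq_iff using e1 p2 by simp
  have e2: "phi * of_int a = of_int j - f * (phi - 1)"
  proof -
    have "phi * of_int a = phi * (real n * phi - f)" using fa by simp
    also have "\<dots> = real n * (phi*phi) - phi * f" by (simp add: algebra_simps)
    also have "\<dots> = real n * (phi + 1) - phi * f" using phi_sq by simp
    also have "\<dots> = real n + real n * phi - f - f * (phi - 1)" by (simp add: algebra_simps)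
    moreover have "real_of_int j = real n + of_int a" using j by simp
    ultimately show ?thesis using fa by linarith
  qed
  have "\<lfloor>phi * of_int a\<rfloor> = j - 1" unfolding floor_eq_iff using e2 p1 by simp
  then show "\<lfloor>phi * of_int \<lfloor>(phi - 1) * of_int j\<rfloor>\<rfloor> + 1 = j" using fl by simp
qed

end
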